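(* Consider the algorithm PGiPN described in the context, applied with some $\epsilon\ge0$. Let $k$ be an iteration at which the algorithm did not stop and at which the switch condition $\mathrm{supp}(x^k)=\mathrm{supp}(\bar x^k)$, $\mathrm{supp}(Bx^k)=\mathrm{supp}(B\bar x^k)$ holds. Define $R_k(y)=\bar\mu_k[y-\mathrm{proj}_{\Pi_k}(y-\bar\mu_k^{-1}(G_k(y-x^k)+\nabla f(x^k)))]$ and $r_k(x)=\bar\mu_k[x-\mathrm{proj}_{\Pi_k}(x-\bar\mu_k^{-1}\nabla f(x))]$. Then: (i) for every $y$ sufficiently close to the (unique) minimizer of $\Theta_k$, the point $y-\bar\mu_k^{-1}R_k(y)$ satisfies both inexactness conditions $\Theta_k(y)\le\Theta_k(x^k)$ and $\mathrm{dist}(0,\partial\Theta_k(y))\le\frac{\min\{\bar\mu_k^{-1},1\}}{2}\min\{\|\bar\mu_k(x^k-\bar x^k)\|,\|\bar\mu_k(x^k-\bar x^k)\|^{1+\varsigma}\}$; (ii) for $y^k$ satisfying these conditions, the line search in the Newton step terminates after finitely many trials and $\alpha_k\ge\min\{1,\frac{(1-\varrho)b_1\beta}{L_1}\|\bar\mu_k(x^k-\bar x^k)\|^\sigma\}$; (iii) the second inexactness condition on $y^k$ implies $\|R_k(y^k)\|\le\frac12\min\{\|r_k(x^k)\|,\|r_k(x^k)\|^{1+\varsigma}\}$.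
   Context: Setting: $B\in\mathbb{R}^{p\times n}$, $\lambda_1,\lambda_2>0$, $l\le0\le u$ in $\mathbb{R}^n$, $f:\mathbb{R}^n\to\mathbb{R}$ twice continuously differentiable, $\Omega=\{x:l\le x\le u\}$, $g(x)=\lambda_1\|Bx\|_0+\lambda_2\|x\|_0+\delta_\Omega(x)$ ($\|\cdot\|_0$ = number of nonzeros, $\delta_\Omega$ indicator), $F=f+g$; $\mathrm{supp}(x)=\{i:x_i\ne0\}$; $\mathrm{prox}_{\mu g}(z)=\arg\min_x\{\frac1{2\mu}\|x-z\|^2+g(x)\}$; $L_1>0$ is a Lipschitz constant of $\nabla f$ on $\Omega$; $\Pi(z)=\{x\in\Omega:\mathrm{supp}(x)\subset\mathrm{supp}(z),\mathrm{supp}(Bx)\subset\mathrm{supp}(Bz)\}$; $\mathrm{proj}_C$ is Euclidean projection; $\partial$ denotes subdifferential. Algorithm PGiPN: parameters $\epsilon\ge0$, $\mu_{\max}>\mu_{\min}>0$, $\tau>1$, $\alpha>0$, $b_1>0$, $b_2\ge1$, $\varrho\in(0,\frac12)$, $\sigma\in(0,\frac12)$, $\varsigma\in(\sigma,1]$, $\beta\in(0,1)$, $x^0\in\Omega$. Iteration $k$: (PG step) pick $\mu_k\in[\mu_{\min},\mu_{\max}]$; let $m_k$ be the smallest nonnegative integer $m$ such that some $\bar x^k\in\mathrm{prox}_{(\mu_k\tau^m)^{-1}g}(x^k-(\mu_k\tau^m)^{-1}\nabla f(x^k))$ satisfies $F(\bar x^k)\le F(x^k)-\frac\alpha2\|x^k-\bar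 x^k\|^2$; set $\bar\mu_k=\mu_k\tau^{m_k}$. If $\bar\mu_k\|x^k-\bar x^k\|\le\epsilon$, stop. If the switch condition holds go to the Newton step, else set $x^{k+1}=\bar x^k$. (Newton step) let $\Pi_k=\Pi(x^k)$, $\Theta_k(x)=f(x^k)+\langle\nabla f(x^k),x-x^k\rangle+\frac12\langle x-x^k,G_k(x-x^k)\rangle+\delta_{\Pi_k}(x)$; find $y^k$ satisfying the two inexactness conditions stated in (i); set $d^k=y^k-x^k$; let $t_k$ be the smallest nonnegative integer $t$ with $f(x^k+\beta^td^k)\le f(x^k)+\varrho\beta^t\langle\nabla f(x^k),d^k\rangle$; $\alpha_k=\beta^{t_k}$, $x^{k+1}=x^k+\alpha_kd^k$. Choice of $G_k$ (with $e_k=b_1\|\bar\mu_k(x^k-\bar x^k)\|^\sigma$): either $G_k=\nabla^2f(x^k)+(b_2[-\lambda_{\min}(\nabla^2f(x^k))]_++e_k)I$; or, when $f(x)=h(Ax-b)$ with $A\in\mathbb{R}^{m\times n}$, $b\in\mathbb{R}^m$, $h$ twice continuously differentiable and separable, $G_k=\nabla^2f(x^k)+b_2[-\lambda_{\min}(\nabla^2h(Ax^k-b))]_+A^\top A+e_kI$ or $G_k=A^\top[\nabla^2h(Ax^k-b)]_+A+e_kI$, where $t_+=\max\{t,0\}$ and $[D]_+$ replaces the negative diagonal entries of the diagonal matrix $D$ by $0$. In all cases $G_k\succeq e_kI$. *)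

theory Defs
  imports "HOL-Analysis.Analysis"
begin

definition supp_vec :: "real^'n \<Rightarrow> 'n set" where
  "supp_vec x = {i. x $ i \<noteq> 0}"

definition l0 :: "real^'n \<Rightarrow> real" where
  "l0 x = real (card (supp_vec x))"

definition box_set :: "real^'n \<Rightarrow> real^'n \<Rightarrow> (real^'n) set" where
  "box_set l u = {x. \<forall>i. l $ i \<le> x $ i \<and> x $ i \<le> u $ i}"

definition ind :: "'a set \<Rightarrow> 'a \<Rightarrow> ereal" where
  "ind C x = (if x \<in> C then 0 else \<infinity>)"

definition gfun :: "real^'n^'p \<Rightarrow> real \<Rightarrow> real \<Rightarrow> real^'n \<Rightarrow> real^'n \<Rightarrow> real^'n \<Rightarrow> ereal" where
  "gfun B lam1 lam2 l u x = ereal (lam1 * l0 (B *v x) + lam2 * l0 x) + ind (box_set l u) x"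

definition prox :: "real \<Rightarrow> ('a::real_normed_vector \<Rightarrow> ereal) \<Rightarrow> 'a \<Rightarrow> 'a set" where
  "prox mu g z = {x. \<forall>y. ereal (1 / (2 * mu) * (norm (x - z))\<^sup>2) + g x
                          \<le> ereal (1 / (2 * mu) * (norm (y - z))\<^sup>2) + g y}"

definition Pi_set :: "real^'n^'p \<Rightarrow> real^'n \<Rightarrow> real^'n \<Rightarrow> real^'n \<Rightarrow> (real^'n) set" where
  "Pi_set B l u z = {x \<in> box_set l u. supp_vec x \<subseteq> supp_vec z \<and> supp_vec (B *v x) \<subseteq> supp_vec (B *v z)}"

definition csubdiff :: "('a::real_inner \<Rightarrow> ereal) \<Rightarrow> 'a \<Rightarrow> 'a set" where
  "csubdiff phi y = {v. \<bar>phi y\<bar> \<noteq> \<infinity> \<and> (\<forall>z. phi y + ereal (v \<bullet> (z - y)) \<le> phi z)}"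

definition dist0 :: "'a::real_normed_vector set \<Rightarrow> ereal" where
  "dist0 S = (if S = {} then \<infinity> else ereal (infdist 0 S))"

definition lambda_min :: "real^'n^'n \<Rightarrow> real" where
  "lambda_min M = Min {c. \<exists>v. v \<noteq> 0 \<and> M *v v = c *s v}"

definition diag_mat :: "real^'n \<Rightarrow> real^'n^'n" where
  "diag_mat d = (\<chi> i j. if i = j then d $ i else 0)"

definition diag_pos :: "real^'n \<Rightarrow> real^'n^'n" where
  "diag_pos d = diag_mat (\<chi> i. max (d $ i) 0)"

definition Theta :: "real \<Rightarrow> real^'n \<Rightarrow> real^'n^'n \<Rightarrow> real^'n \<Rightarrow> (real^'n) set \<Rightarrow> real^'n \<Rightarrow> ereal" where
  "Theta fx gx G x P y = ereal (fx + gx \<bullet> (y - x) + 1/2 * ((y - x) \<bullet> (G *v (y - x)))) + ind P y"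

end

theory Submission
  imports Defs
begin


lemma ray_vderiv:
  fixes F :: "'a::real_normed_vector \<Rightarrow> 'b::real_normed_vector"
  assumes "(F has_derivative F') (at (p + s *\<^sub>R w))"
  shows "((\<lambda>s. F (p + s *\<^sub>R w)) has_vector_derivative F' w) (at s)"
proof -
  have bl: "bounded_linear F'" using assms has_derivative_bounded_linear by blast
  have "((\<lambda>s. p + s *\<^sub>R w) has_derivative (\<lambda>h. h *\<^sub>R w)) (at s)"
    by (auto intro!: derivative_eq_intros)
  from has_derivative_compose[OF this assms]
  have "((\<lambda>s. F (p + s *\<^sub>R w)) has_derivative (\<lambda>h. F' (h *\<^sub>R w))) (at s)" .
  moreover have "(\<lambda>h. F' (h *\<^sub>R w)) = (\<lambda>h. h *\<^sub>R F' w)"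
    using bl by (simp add: linear_simps)
  ultimately show ?thesis unfolding has_vector_derivative_def by simp
qed

lemma ray_rderiv:
  fixes F :: "'a::real_normed_vector \<Rightarrow> real"
  assumes "(F has_derivative F') (at (p + s *\<^sub>R w))"
  shows "((\<lambda>s. F (p + s *\<^sub>R w)) has_real_derivative F' w) (at s)"
  using ray_vderiv[OF assms] by (simp add: has_real_derivative_iff_has_vector_derivative)

lemma second_diff_mvt:
  fixes f :: "real^'n \<Rightarrow> real" and gf :: "real^'n \<Rightarrow> real^'n" and Hf :: "real^'n \<Rightarrow> real^'n^'n"
  assumes d1: "\<forall>z. (f has_derivative (\<lambda>h. gf z \<bullet> h)) (at z)"
    and d2: "\<forall>z. (gf has_derivative (\<lambda>h. Hf z *v h)) (at z)"
    and h: "h > 0"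
  shows "\<exists>a b. 0 < a \<and> a < h \<and> 0 < b \<and> b < h \<and>
     f (x + h *\<^sub>R u + h *\<^sub>R v) - f (x + h *\<^sub>R u) - f (x + h *\<^sub>R v) + f x
       = h^2 * ((Hf (x + a *\<^sub>R u + b *\<^sub>R v) *v v) \<bullet> u)"
proof -
  define a where "a = (\<lambda>s. f (x + h *\<^sub>R v + s *\<^sub>R u) - f (x + s *\<^sub>R u))"
  have "\<And>s. (a has_real_derivative (gf (x + h *\<^sub>R v + s *\<^sub>R u) \<bullet> u - gf (x + s *\<^sub>R u) \<bullet> u)) (at s)"
    unfolding a_def
    by (intro DERIV_diff ray_rderiv[where F=f and F'="\<lambda>h. gf _ \<bullet> h", simplified] d1[rule_format])
  then obtain \<xi> where xi: "0 < \<xi>" "\<xi> < h"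
     "a h - a 0 = (h - 0) * (gf (x + h *\<^sub>R v + \<xi> *\<^sub>R u) \<bullet> u - gf (x + \<xi> *\<^sub>R u) \<bullet> u)"
    using MVT2[OF h, of a "\<lambda>s. gf (x + h *\<^sub>R v + s *\<^sub>R u) \<bullet> u - gf (x + s *\<^sub>R u) \<bullet> u"] by blast
  define b where "b = (\<lambda>t. gf (x + \<xi> *\<^sub>R u + t *\<^sub>R v) \<bullet> u)"
  have "\<And>t. (b has_real_derivative ((Hf (x + \<xi> *\<^sub>R u + t *\<^sub>R v) *v v) \<bullet> u)) (at t)"
  proof -
    fix t
    have "(gf has_derivative (\<lambda>h. Hf (x + \<xi> *\<^sub>R u + t *\<^sub>R v) *v h)) (at (x + \<xi> *\<^sub>R u + t *\<^sub>R v))"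
      using d2 by blast
    then have "((\<lambda>z. gf z \<bullet> u) has_derivative (\<lambda>h. (Hf (x + \<xi> *\<^sub>R u + t *\<^sub>R v) *v h) \<bullet> u)) (at (x + \<xi> *\<^sub>R u + t *\<^sub>R v))"
      by (auto intro!: derivative_eq_intros)
    from ray_rderiv[OF this] show "?thesis t" unfolding b_def .
  qed
  then obtain \<eta> where eta: "0 < \<eta>" "\<eta> < h"
     "b h - b 0 = (h - 0) * ((Hf (x + \<xi> *\<^sub>R u + \<eta> *\<^sub>R v) *v v) \<bullet> u)"
    using MVT2[OF h, of b "\<lambda>t. (Hf (x + \<xi> *\<^sub>R u + t *\<^sub>R v) *v v) \<bullet> u"] by blast
  have "f (x + h *\<^sub>R u + h *\<^sub>R v) - f (x + h *\<^sub>R u) - f (x + h *\<^sub>R v) + f x = a h - a 0"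
    unfolding a_def by (simp add: algebra_simps)
  also have "\<dots> = h * (b h - b 0)" using xi(3) unfolding b_def by (simp add: algebra_simps)
  also have "\<dots> = h^2 * ((Hf (x + \<xi> *\<^sub>R u + \<eta> *\<^sub>R v) *v v) \<bullet> u)"
    using eta(3) by (simp add: power2_eq_square)
  finally show ?thesis using xi eta by blast
qed

lemma bl_mv: "bounded_linear (\<lambda>M::real^'n^'m. M *v v)"
proof -
  have "linear (\<lambda>M::real^'n^'m. M *v v)"
    by (rule linearI) (auto simp: matrix_vector_mult_add_rdistrib scaleR_matrix_vector_assoc)
  then show ?thesis using linear_conv_bounded_linear by blast
qed

lemma hess_sym:
  fixes f :: "real^'n \<Rightarrow> real" and gf :: "real^'n \<Rightarrow> real^'n" and Hf :: "real^'n \<Rightarrow> real^'n^'n"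
  assumes d1: "\<forall>z. (f has_derivative (\<lambda>h. gf z \<bullet> h)) (at z)"
    and d2: "\<forall>z. (gf has_derivative (\<lambda>h. Hf z *v h)) (at z)"
    and c: "continuous_on UNIV Hf"
  shows "(Hf x *v v) \<bullet> u = (Hf x *v u) \<bullet> v"
proof (rule ccontr)
  define c1 where "c1 = (\<lambda>p. (Hf p *v v) \<bullet> u)"
  define c2 where "c2 = (\<lambda>p. (Hf p *v u) \<bullet> v)"
  assume ne: "(Hf x *v v) \<bullet> u \<noteq> (Hf x *v u) \<bullet> v"
  define \<delta> where "\<delta> = \<bar>c1 x - c2 x\<bar> / 2"
  have dpos: "\<delta> > 0" using ne unfolding \<delta>_def c1_def c2_def by auto
  have cc1: "continuous_on UNIV c1" unfolding c1_def
    using c by (auto intro!: continuous_intros bounded_linear.continuous_on[OF bl_mv])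
  have cc2: "continuous_on UNIV c2" unfolding c2_def
    using c by (auto intro!: continuous_intros bounded_linear.continuous_on[OF bl_mv])
  obtain r1 where r1: "r1 > 0" "\<forall>p. dist p x < r1 \<longrightarrow> dist (c1 p) (c1 x) < \<delta>"
    using cc1 dpos unfolding continuous_on_iff by blast
  obtain r2 where r2: "r2 > 0" "\<forall>p. dist p x < r2 \<longrightarrow> dist (c2 p) (c2 x) < \<delta>"
    using cc2 dpos unfolding continuous_on_iff by blast
  define h where "h = min r1 r2 / (norm u + norm v + 1)"
  have hpos: "h > 0" unfolding h_def using r1 r2 by (simp add: add_nonneg_pos)
  have close: "dist (x + a *\<^sub>R p + b *\<^sub>R w) x < min r1 r2"
    if "0 < a" "a < h" "0 < b" "b < h" "(p = u \<and> w = v) \<or> (p = v \<and> w = u)" for a b p w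
  proof -
    have "dist (x + a *\<^sub>R p + b *\<^sub>R w) x = norm (a *\<^sub>R p + b *\<^sub>R w)" by (simp add: dist_norm)
    also have "\<dots> \<le> a * norm p + b * norm w"
      using that norm_triangle_ineq[of "a *\<^sub>R p" "b *\<^sub>R w"] by simp
    also have "\<dots> \<le> h * norm p + h * norm w"
      using that by (intro add_mono mult_right_mono) auto
    also have "\<dots> = h * (norm u + norm v)"
      using that by (auto simp: algebra_simps)
    also have "\<dots> < h * (norm u + norm v + 1)"
      using that hpos by (auto simp: algebra_simps)
    also have "\<dots> = min r1 r2"
    proof -
      have "norm u + norm v + 1 > 0" using norm_ge_zero[of u] norm_ge_zero[of v] by linarith
      then show ?thesis unfolding h_def by simp
    qed
    finally show ?thesis .
  qed
  obtain a b where ab: "0 < a" "a < h" "0 < b" "b < h"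
     "f (x + h *\<^sub>R u + h *\<^sub>R v) - f (x + h *\<^sub>R u) - f (x + h *\<^sub>R v) + f x = h^2 * c1 (x + a *\<^sub>R u + b *\<^sub>R v)"
    using second_diff_mvt[OF d1 d2 hpos, of x u v] unfolding c1_def by blast
  obtain a' b' where ab': "0 < a'" "a' < h" "0 < b'" "b' < h"
     "f (x + h *\<^sub>R v + h *\<^sub>R u) - f (x + h *\<^sub>R v) - f (x + h *\<^sub>R u) + f x = h^2 * c2 (x + a' *\<^sub>R v + b' *\<^sub>R u)"
    using second_diff_mvt[OF d1 d2 hpos, of x v u] unfolding c2_def by blast
  have "h^2 * c1 (x + a *\<^sub>R u + b *\<^sub>R v) = h^2 * c2 (x + a' *\<^sub>R v + b' *\<^sub>R u)"
    using ab(5) ab'(5) by (simp add: algebra_simps)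
  then have eq: "c1 (x + a *\<^sub>R u + b *\<^sub>R v) = c2 (x + a' *\<^sub>R v + b' *\<^sub>R u)"
    using hpos by simp
  have "dist (x + a *\<^sub>R u + b *\<^sub>R v) x < r1" using close[OF ab(1-4), of u v] by auto
  then have e1: "\<bar>c1 (x + a *\<^sub>R u + b *\<^sub>R v) - c1 x\<bar> < \<delta>" using r1 by (auto simp: dist_real_def)
  have "dist (x + a' *\<^sub>R v + b' *\<^sub>R u) x < r2" using close[OF ab'(1-4), of v u] by auto
  then have e2: "\<bar>c2 (x + a' *\<^sub>R v + b' *\<^sub>R u) - c2 x\<bar> < \<delta>" using r2 by (auto simp: dist_real_def)
  define P1 where "P1 = c1 (x + a *\<^sub>R u + b *\<^sub>R v)"
  define P2 where "P2 = c2 (x + a' *\<^sub>R v + b' *\<^sub>R u)"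
  have "\<bar>P1 - c1 x\<bar> < \<bar>c1 x - c2 x\<bar> / 2" "\<bar>P2 - c2 x\<bar> < \<bar>c1 x - c2 x\<bar> / 2" "P1 = P2"
    using e1 e2 eq \<delta>_def P1_def P2_def by auto
  then show False by (simp add: abs_real_def split: if_splits)
qed




lemma quad_lin_nonneg:
  fixes \<alpha> K :: real
  assumes "\<forall>t. 0 \<le> 2 * t * \<alpha> + t^2 * K" "\<alpha> \<ge> 0"
  shows "\<alpha> = 0"
proof (rule ccontr)
  assume "\<alpha> \<noteq> 0"
  then have ap: "\<alpha> > 0" using assms(2) by simp
  define t where "t = - \<alpha> / (\<bar>K\<bar> + 1)"
  have d: "\<bar>K\<bar> + 1 > 0" by simp
  have "t^2 * K \<le> t^2 * \<bar>K\<bar>" by (simp add: mult_left_mono)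
  also have "\<dots> < t^2 * (\<bar>K\<bar> + 1)"
  proof -
    have "t \<noteq> 0" unfolding t_def using ap d by simp
    then have "t^2 > 0" by simp
    then show ?thesis by (intro mult_strict_left_mono) auto
  qed
  also have "\<dots> = - t * \<alpha>"
  proof -
    have "t * (\<bar>K\<bar> + 1) = - \<alpha>" unfolding t_def using d by simp
    then show ?thesis by (simp add: power2_eq_square mult.assoc)
  qed
  finally have "t^2 * K < - t * \<alpha>" .
  moreover have "t * \<alpha> < 0" unfolding t_def using ap d by (simp add: divide_neg_pos mult_neg_pos)
  ultimately have "2 * t * \<alpha> + t^2 * K < 0" by linarith
  with assms(1) show False by (meson not_le)
qed

lemma lambda_min_le:
  fixes M :: "real^'n^'n"
  assumes sym: "\<forall>u v. (M *v v) \<bullet> u = (M *v u) \<bullet> v"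
  shows "lambda_min M * (norm z)^2 \<le> z \<bullet> (M *v z)"
proof -
  define S where "S = {c. \<exists>v. v \<noteq> 0 \<and> M *v v = c *s v}"
  have cs: "continuous_on (sphere 0 1) (\<lambda>v::real^'n. v \<bullet> (M *v v))"
    by (auto intro!: continuous_intros matrix_vector_mult_linear_continuous_on)
  have "sphere (0::real^'n) 1 \<noteq> {}" by simp
  then obtain v0 where v0: "v0 \<in> sphere 0 1" "\<forall>y\<in>sphere 0 1. v0 \<bullet> (M *v v0) \<le> y \<bullet> (M *v y)"
    using continuous_attains_inf[OF compact_sphere _ cs] by blast
  define c0 where "c0 = v0 \<bullet> (M *v v0)"
  have nv0: "norm v0 = 1" using v0 by simp
  have ray: "c0 * (norm z)^2 \<le> z \<bullet> (M *v z)" for z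
  proof (cases "z = 0")
    case True then show ?thesis by simp
  next
    case False
    then have nz: "norm z > 0" by simp
    have "(z /\<^sub>R norm z) \<in> sphere 0 1" using nz by simp
    then have "c0 \<le> (z /\<^sub>R norm z) \<bullet> (M *v (z /\<^sub>R norm z))" using v0 unfolding c0_def by blast
    also have "\<dots> = (z \<bullet> (M *v z)) / (norm z)^2"
      by (simp add: matrix_vector_mult_scaleR power2_eq_square divide_inverse)
    finally show ?thesis using nz by (simp add: field_simps)
  qed
  define w where "w = M *v v0 - c0 *\<^sub>R v0"
  define K where "K = w \<bullet> (M *v w) - c0 * (w \<bullet> w)"
  have symw: "v0 \<bullet> (M *v w) = w \<bullet> (M *v v0)"
    using sym by (simp add: inner_commute)
  have "\<forall>t. 0 \<le> 2 * t * (w \<bullet> w) + t^2 * K"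
  proof
    fix t
    have vv: "v0 \<bullet> v0 = 1" using nv0 by (metis norm_eq_1)
    have r: "c0 * (norm (v0 + t *\<^sub>R w))^2 \<le> (v0 + t *\<^sub>R w) \<bullet> (M *v (v0 + t *\<^sub>R w))" by (rule ray)
    have n2: "(norm (v0 + t *\<^sub>R w))^2 = 1 + 2 * t * (v0 \<bullet> w) + t^2 * (w \<bullet> w)"
    proof -
      have "(norm (v0 + t *\<^sub>R w))^2 = (v0 + t *\<^sub>R w) \<bullet> (v0 + t *\<^sub>R w)" by (simp add: power2_norm_eq_inner)
      also have "\<dots> = v0 \<bullet> v0 + t * (v0 \<bullet> w) + t * (w \<bullet> v0) + t * (t * (w \<bullet> w))"
        by (simp add: inner_add_left inner_add_right distrib_left)
      also have "\<dots> = v0 \<bullet> v0 + 2 * t * (v0 \<bullet> w) + t^2 * (w \<bullet> w)"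
        by (simp add: inner_commute power2_eq_square)
      finally show ?thesis using vv by simp
    qed
    have q2: "(v0 + t *\<^sub>R w) \<bullet> (M *v (v0 + t *\<^sub>R w)) = c0 + 2 * t * (w \<bullet> (M *v v0)) + t^2 * (w \<bullet> (M *v w))"
    proof -
      have "M *v (v0 + t *\<^sub>R w) = M *v v0 + t *\<^sub>R (M *v w)"
        by (simp add: matrix_vector_right_distrib matrix_vector_mult_scaleR)
      then have "(v0 + t *\<^sub>R w) \<bullet> (M *v (v0 + t *\<^sub>R w)) = v0 \<bullet> (M *v v0) + t * (v0 \<bullet> (M *v w)) + t * (w \<bullet> (M *v v0)) + t * (t * (w \<bullet> (M *v w)))"
        by (simp add: inner_add_left inner_add_right distrib_left)
      also have "\<dots> = c0 + 2 * t * (w \<bullet> (M *v v0)) + t^2 * (w \<bullet> (M *v w))"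
        using symw unfolding c0_def by (simp add: power2_eq_square)
      finally show ?thesis .
    qed
    have wm: "w \<bullet> (M *v v0) = w \<bullet> w + c0 * (v0 \<bullet> w)"
    proof -
      have "w \<bullet> w = w \<bullet> (M *v v0) - c0 * (w \<bullet> v0)"
        using inner_diff_right[of w "M *v v0" "c0 *\<^sub>R v0"] unfolding w_def[symmetric] by simp
      then show ?thesis by (simp add: inner_commute)
    qed
    have e1: "c0 * (1 + 2 * t * (v0 \<bullet> w) + t^2 * (w \<bullet> w)) = c0 + 2 * t * (c0 * (v0 \<bullet> w)) + t^2 * (c0 * (w \<bullet> w))"
      by (simp add: distrib_left mult.assoc mult.left_commute)
    have e2: "2 * t * (w \<bullet> w + c0 * (v0 \<bullet> w)) = 2 * t * (w \<bullet> w) + 2 * t * (c0 * (v0 \<bullet> w))"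
      by (simp add: distrib_left)
    have e3: "t^2 * K = t^2 * (w \<bullet> (M *v w)) - t^2 * (c0 * (w \<bullet> w))"
      unfolding K_def by (simp add: right_diff_distrib)
    show "0 \<le> 2 * t * (w \<bullet> w) + t^2 * K"
      using r unfolding n2 q2 wm e1 e2 e3 by linarith
  qed
  then have "w \<bullet> w = 0" by (intro quad_lin_nonneg) auto
  then have eig: "M *v v0 = c0 *s v0" unfolding w_def by (simp add: scalar_mult_eq_scaleR)
  have c0S: "c0 \<in> S" unfolding S_def using eig nv0 by (auto intro!: exI[of _ v0])
  have "\<forall>c\<in>S. \<exists>v. v \<noteq> 0 \<and> M *v v = c *s v" unfolding S_def by blast
  then obtain ev where ev0: "\<forall>c\<in>S. ev c \<noteq> 0 \<and> M *v ev c = c *s ev c"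
    using bchoice[of S "\<lambda>c v. v \<noteq> 0 \<and> M *v v = c *s v"] by blast
  have ev: "\<And>c. c \<in> S \<Longrightarrow> ev c \<noteq> 0 \<and> M *v ev c = c *s ev c" using ev0 by blast
  have orth: "ev c \<bullet> ev c' = 0" if "c \<in> S" "c' \<in> S" "c \<noteq> c'" for c c'
  proof -
    have "c * (ev c \<bullet> ev c') = (M *v ev c) \<bullet> ev c'" using ev[OF that(1)] by (simp add: scalar_mult_eq_scaleR)
    also have "\<dots> = (M *v ev c') \<bullet> ev c" using sym by blast
    also have "\<dots> = c' * (ev c \<bullet> ev c')" using ev[OF that(2)] by (simp add: scalar_mult_eq_scaleR inner_commute)
    finally have "(c - c') * (ev c \<bullet> ev c') = 0" by (simp add: algebra_simps)
    then show ?thesis using that(3) by simp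
  qed
  have inj: "inj_on ev S"
  proof (rule inj_onI)
    fix c c' assume a: "c \<in> S" "c' \<in> S" "ev c = ev c'"
    show "c = c'"
    proof (rule ccontr)
      assume "c \<noteq> c'"
      then have "ev c \<bullet> ev c = 0" using orth[OF a(1,2)] a(3) by simp
      then show False using ev[OF a(1)] by simp
    qed
  qed
  have "pairwise orthogonal (ev ` S)"
    unfolding pairwise_def orthogonal_def using orth by fastforce
  moreover have "0 \<notin> ev ` S" using ev by auto
  ultimately have "independent (ev ` S)" by (rule pairwise_orthogonal_independent)
  then have "finite (ev ` S)" by (rule finiteI_independent)
  then have finS: "finite S" using inj finite_imageD by blast
  have "lambda_min M = Min S" unfolding lambda_min_def S_def by simp
  then have "lambda_min M \<le> c0" using Min_le[OF finS c0S] by simp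
  then have "lambda_min M * (norm z)^2 \<le> c0 * (norm z)^2" by (simp add: mult_right_mono)
  with ray[of z] show ?thesis by simp
qed



definition qm :: "real \<Rightarrow> real^'n \<Rightarrow> real^'n^'n \<Rightarrow> real^'n \<Rightarrow> real^'n \<Rightarrow> real" where
  "qm fx gx G x y = fx + gx \<bullet> (y - x) + 1/2 * ((y - x) \<bullet> (G *v (y - x)))"

lemma Theta_eq: "Theta fx gx G x P y = (if y \<in> P then ereal (qm fx gx G x y) else \<infinity>)"
  unfolding Theta_def ind_def qm_def by simp

lemma qm_expand:
  assumes Gsym: "\<forall>u v. (G *v v) \<bullet> u = (G *v u) \<bullet> v"
  shows "qm fx gx G x z = qm fx gx G x y + (G *v (y - x) + gx) \<bullet> (z - y) + 1/2 * ((z - y) \<bullet> (G *v (z - y)))"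
proof -
  define d where "d = y - x"
  define w where "w = z - y"
  have zx: "z - x = d + w" unfolding d_def w_def by simp
  have "(d + w) \<bullet> (G *v (d + w)) = d \<bullet> (G *v d) + d \<bullet> (G *v w) + w \<bullet> (G *v d) + w \<bullet> (G *v w)"
    by (simp add: matrix_vector_right_distrib inner_add_left inner_add_right)
  moreover have "d \<bullet> (G *v w) = w \<bullet> (G *v d)" using Gsym by (simp add: inner_commute)
  ultimately have "(d + w) \<bullet> (G *v (d + w)) = d \<bullet> (G *v d) + 2 * ((G *v d) \<bullet> w) + w \<bullet> (G *v w)"
    by (simp add: inner_commute)
  then show ?thesis unfolding qm_def zx d_def[symmetric] w_def[symmetric]
    by (simp add: inner_add_left inner_add_right algebra_simps)
qed

lemma small_le_zero:
  fixes a c :: real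
  assumes "\<forall>t. 0 < t \<and> t \<le> 1 \<longrightarrow> a \<le> t * c"
  shows "a \<le> 0"
proof (rule ccontr)
  assume "\<not> a \<le> 0"
  then have ap: "a > 0" by simp
  define t where "t = min 1 (a / (2 * (\<bar>c\<bar> + 1)))"
  have tp: "0 < t" "t \<le> 1" unfolding t_def using ap by (auto simp: add_pos_pos)
  have "t * c \<le> t * \<bar>c\<bar>" using tp by (simp add: mult_left_mono)
  also have "\<dots> \<le> (a / (2 * (\<bar>c\<bar> + 1))) * \<bar>c\<bar>" unfolding t_def by (intro mult_right_mono) auto
  also have "\<dots> < a"
  proof -
    have "(a / (2 * (\<bar>c\<bar> + 1))) * \<bar>c\<bar> = a * (\<bar>c\<bar> / (2 * (\<bar>c\<bar> + 1)))" by simp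
    also have "\<dots> < a * 1"
      using ap by (intro mult_strict_left_mono) (auto simp: field_simps)
    finally show ?thesis by simp
  qed
  finally show False using assms tp by force
qed

lemma subdiff_normal:
  assumes Gsym: "\<forall>u v. (G *v v) \<bullet> u = (G *v u) \<bullet> v"
    and cP: "convex P"
    and v: "v \<in> csubdiff (Theta fx gx G x P) y"
  shows "y \<in> P \<and> (\<forall>z\<in>P. (v - (G *v (y - x) + gx)) \<bullet> (z - y) \<le> 0)"
proof -
  let ?q = "qm fx gx G x"
  let ?g = "G *v (y - x) + gx"
  have fin: "\<bar>Theta fx gx G x P y\<bar> \<noteq> \<infinity>" and ineq: "\<forall>z. Theta fx gx G x P y + ereal (v \<bullet> (z - y)) \<le> Theta fx gx G x P z"
    using v unfolding csubdiff_def by auto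
  have yP: "y \<in> P" using fin unfolding Theta_eq by (auto split: if_splits)
  have "(v - ?g) \<bullet> (z - y) \<le> 0" if zP: "z \<in> P" for z
  proof (rule small_le_zero, intro allI impI)
    fix t :: real assume t: "0 < t \<and> t \<le> 1"
    define zt where "zt = y + t *\<^sub>R (z - y)"
    have "zt = (1 - t) *\<^sub>R y + t *\<^sub>R z" unfolding zt_def by (simp add: algebra_simps)
    then have ztP: "zt \<in> P" using convexD_alt[OF cP yP zP, of t] t by simp
    have "Theta fx gx G x P y + ereal (v \<bullet> (zt - y)) \<le> Theta fx gx G x P zt" using ineq by blast
    then have "?q y + v \<bullet> (zt - y) \<le> ?q zt" using yP ztP unfolding Theta_eq by simp
    also have "?q zt = ?q y + ?g \<bullet> (zt - y) + 1/2 * ((zt - y) \<bullet> (G *v (zt - y)))"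
      by (rule qm_expand[OF Gsym])
    finally have "v \<bullet> (zt - y) - ?g \<bullet> (zt - y) \<le> 1/2 * ((zt - y) \<bullet> (G *v (zt - y)))" by simp
    then have "t * ((v - ?g) \<bullet> (z - y)) \<le> t * (t * (1/2 * ((z - y) \<bullet> (G *v (z - y)))))"
      unfolding zt_def by (simp add: inner_diff_left matrix_vector_mult_scaleR algebra_simps)
    then show "(v - ?g) \<bullet> (z - y) \<le> t * (1/2 * ((z - y) \<bullet> (G *v (z - y))))"
      using t by simp
  qed
  then show ?thesis using yP by blast
qed

lemma normal_subdiff:
  assumes Gsym: "\<forall>u v. (G *v v) \<bullet> u = (G *v u) \<bullet> v"
    and Gpsd: "\<forall>v. 0 \<le> v \<bullet> (G *v v)"
    and yP: "y \<in> P" and n: "\<forall>z\<in>P. n \<bullet> (z - y) \<le> 0"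
  shows "(G *v (y - x) + gx) + n \<in> csubdiff (Theta fx gx G x P) y"
proof -
  let ?q = "qm fx gx G x"
  let ?g = "G *v (y - x) + gx"
  have "Theta fx gx G x P y + ereal ((?g + n) \<bullet> (z - y)) \<le> Theta fx gx G x P z" for z
  proof (cases "z \<in> P")
    case True
    have "?q y + (?g + n) \<bullet> (z - y) \<le> ?q z"
    proof -
      have "n \<bullet> (z - y) \<le> 0" using n True by blast
      then show ?thesis
        using qm_expand[OF Gsym, of fx gx x z y] Gpsd[rule_format, of "z - y"]
        by (simp add: inner_add_left)
    qed
    then show ?thesis using True yP unfolding Theta_eq by simp
  next
    case False
    then show ?thesis unfolding Theta_eq by simp
  qed
  moreover have "\<bar>Theta fx gx G x P y\<bar> \<noteq> \<infinity>" using yP unfolding Theta_eq by simp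
  ultimately show ?thesis unfolding csubdiff_def by blast
qed

lemma proj_normal:
  fixes P :: "(real^'n) set"
  assumes cP: "convex P" "closed P" and yP: "y \<in> P" and n: "\<forall>z\<in>P. n \<bullet> (z - y) \<le> 0" and c: "c \<ge> 0"
  shows "closest_point P (y + c *\<^sub>R n) = y"
proof -
  have "dist (y + c *\<^sub>R n) y \<le> dist (y + c *\<^sub>R n) z" if zP: "z \<in> P" for z
  proof -
    have "(dist (y + c *\<^sub>R n) z)^2 = (c *\<^sub>R n + (y - z)) \<bullet> (c *\<^sub>R n + (y - z))"
      by (simp add: dist_norm power2_norm_eq_inner algebra_simps)
    also have "\<dots> = (c *\<^sub>R n) \<bullet> (c *\<^sub>R n) - 2 * c * (n \<bullet> (z - y)) + (y - z) \<bullet> (y - z)"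
      by (simp add: inner_add_left inner_add_right inner_commute inner_diff_right algebra_simps)
    also have "\<dots> \<ge> (c *\<^sub>R n) \<bullet> (c *\<^sub>R n)"
    proof -
      have "n \<bullet> (z - y) \<le> 0" using n zP by blast
      then have "c * (n \<bullet> (z - y)) \<le> 0" using c by (simp add: mult_nonneg_nonpos)
      moreover have "(y - z) \<bullet> (y - z) \<ge> 0" by simp
      ultimately show ?thesis by linarith
    qed
    finally have "(c *\<^sub>R n) \<bullet> (c *\<^sub>R n) \<le> (dist (y + c *\<^sub>R n) z)^2" .
    moreover have "(c *\<^sub>R n) \<bullet> (c *\<^sub>R n) = (norm (c *\<^sub>R n))^2" by (rule power2_norm_eq_inner[symmetric])
    moreover have "dist (y + c *\<^sub>R n) y = norm (c *\<^sub>R n)" by (simp add: dist_norm)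
    ultimately have "(dist (y + c *\<^sub>R n) y)^2 \<le> (dist (y + c *\<^sub>R n) z)^2" by simp
    then show ?thesis by (simp add: power2_le_iff_abs_le)
  qed
  then show ?thesis using closest_point_unique[OF cP yP] by (metis)
qed

lemma min_normal:
  assumes Gsym: "\<forall>u v. (G *v v) \<bullet> u = (G *v u) \<bullet> v"
    and cP: "convex P" and yP: "y \<in> P"
    and ymin: "\<forall>w. Theta fx gx G x P y \<le> Theta fx gx G x P w"
  shows "\<forall>z\<in>P. (- (G *v (y - x) + gx)) \<bullet> (z - y) \<le> 0"
proof -
  have "0 \<in> csubdiff (Theta fx gx G x P) y"
    using ymin yP unfolding csubdiff_def by (simp add: Theta_eq)
  from subdiff_normal[OF Gsym cP this] show ?thesis by simp
qed

lemma qm_cont: "continuous_on S (qm fx gx G x)"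
  unfolding qm_def by (auto intro!: continuous_intros bounded_linear.continuous_on[OF matrix_vector_mul_bounded_linear])

lemma Theta_unique_min:
  fixes P :: "(real^'n) set"
  assumes Gsym: "\<forall>u v. (G *v v) \<bullet> u = (G *v u) \<bullet> v"
    and Gpos: "\<forall>v. e * (norm v)^2 \<le> v \<bullet> (G *v v)" and e: "e > 0"
    and cP: "convex P" "closed P" and xP: "x \<in> P"
  shows "\<exists>ys\<in>P. \<forall>z. (\<forall>w. Theta fx gx G x P z \<le> Theta fx gx G x P w) \<longleftrightarrow> z = ys"
proof -
  let ?q = "qm fx gx G x"
  let ?Th = "Theta fx gx G x P"
  define R where "R = 2 * norm gx / e + 1"
  define K where "K = P \<inter> cball x R"
  have Rp: "R > 0" unfolding R_def using e by (simp add: add_nonneg_pos)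
  have cK: "compact K" unfolding K_def using cP(2) by (simp add: closed_Int_compact)
  have xK: "x \<in> K" unfolding K_def using xP Rp by simp
  obtain ys where ys: "ys \<in> K" "\<forall>z\<in>K. ?q ys \<le> ?q z"
    using continuous_attains_inf[OF cK _ qm_cont] xK by blast
  have ysP: "ys \<in> P" using ys K_def by simp
  have far: "?q x < ?q z" if "z \<in> P" "z \<notin> K" for z
  proof -
    define r where "r = norm (z - x)"
    have rR: "r > R" using that unfolding K_def r_def by (simp add: dist_norm norm_minus_commute)
    have "gx \<bullet> (z - x) \<ge> - (norm gx * r)" unfolding r_def
      using Cauchy_Schwarz_ineq2[of gx "z - x"] by linarith
    moreover have "(z - x) \<bullet> (G *v (z - x)) \<ge> e * r^2" using Gpos unfolding r_def by blast
    moreover have "e * r^2 / 2 > norm gx * r"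
    proof -
      have "e * r > e * R" using rR e by simp
      also have "e * R = 2 * norm gx + e" unfolding R_def using e by (simp add: field_simps)
      finally have "e * r / 2 > norm gx" using e by simp
      then have "(e * r / 2) * r > norm gx * r" using rR Rp by (intro mult_strict_right_mono) auto
      then show ?thesis by (simp add: power2_eq_square mult.assoc)
    qed
    ultimately show ?thesis unfolding qm_def by simp
  qed
  have ysmin: "?q ys \<le> ?q z" if "z \<in> P" for z
  proof (cases "z \<in> K")
    case True then show ?thesis using ys by blast
  next
    case False
    then have "?q x < ?q z" using far that by blast
    moreover have "?q ys \<le> ?q x" using ys xK by blast
    ultimately show ?thesis by simp
  qed
  have ysTh: "\<forall>w. ?Th ys \<le> ?Th w" using ysmin ysP unfolding Theta_eq by simp
  have "z = ys" if zmin: "\<forall>w. ?Th z \<le> ?Th w" for z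
  proof -
    have "?Th z \<le> ?Th x" using zmin by blast
    then have zP: "z \<in> P" using xP unfolding Theta_eq by (auto split: if_splits)
    have "?q z \<le> ?q ys" using zmin[rule_format, of ys] zP ysP unfolding Theta_eq by simp
    have nrm: "(- (G *v (ys - x) + gx)) \<bullet> (z - ys) \<le> 0" using min_normal[OF Gsym cP(1) ysP ysTh] zP by blast
    have "?q z = ?q ys + (G *v (ys - x) + gx) \<bullet> (z - ys) + 1/2 * ((z - ys) \<bullet> (G *v (z - ys)))"
      by (rule qm_expand[OF Gsym])
    moreover have "e * (norm (z - ys))^2 \<le> (z - ys) \<bullet> (G *v (z - ys))" using Gpos by blast
    moreover have "(G *v (ys - x) + gx) \<bullet> (z - ys) \<ge> 0" using nrm unfolding inner_minus_left by simp
    ultimately have "?q ys + 1/2 * (e * (norm (z - ys))^2) \<le> ?q z" by linarith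
    with \<open>?q z \<le> ?q ys\<close> have "e * (norm (z - ys))^2 \<le> 0" by simp
    then have "(norm (z - ys))^2 \<le> 0" using e by (simp add: mult_le_0_iff)
    then show "z = ys" by simp
  qed
  then show ?thesis using ysP ysTh by blast
qed




lemma comp_deriv:
  fixes A :: "real^'n^'m" and bb :: "real^'m"
  assumes "\<forall>t. (hs i has_real_derivative hs1 i t) (at t)"
  shows "((\<lambda>z. hs i ((A *v z - bb) $ i)) has_derivative (\<lambda>h. hs1 i ((A *v z - bb) $ i) * (A *v h) $ i)) (at z)"
proof -
  have lin: "((\<lambda>z. (A *v z - bb) $ i) has_derivative (\<lambda>h. (A *v h) $ i)) (at z)"
  proof -
    have "((\<lambda>z. A *v z - bb) has_derivative (\<lambda>h. A *v h)) (at z)"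
      using bounded_linear.has_derivative[OF matrix_vector_mul_bounded_linear has_derivative_ident]
      by (auto intro!: derivative_eq_intros)
    from bounded_linear.has_derivative[OF bounded_linear_vec_nth this] show ?thesis .
  qed
  have "(hs i has_derivative (\<lambda>t. hs1 i ((A *v z - bb) $ i) * t)) (at ((A *v z - bb) $ i))"
    using assms has_field_derivative_def by blast
  from has_derivative_compose[OF lin this] show ?thesis by simp
qed

lemma hess_comp:
  fixes A :: "real^'n^'m" and bb :: "real^'m" and f :: "real^'n \<Rightarrow> real"
  assumes fdef: "\<forall>z. f z = (\<Sum>i\<in>UNIV. hs i ((A *v z - bb) $ i))"
    and hd: "\<forall>i t. (hs i has_real_derivative hs1 i t) (at t) \<and> (hs1 i has_real_derivative hs2 i t) (at t)"
    and d1: "\<forall>z. (f has_derivative (\<lambda>h. gf z \<bullet> h)) (at z)"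
    and d2: "\<forall>z. (gf has_derivative (\<lambda>h. Hf z *v h)) (at z)"
  shows "v \<bullet> (Hf x *v v) = (\<Sum>i\<in>UNIV. hs2 i ((A *v x - bb) $ i) * ((A *v v) $ i)^2)"
proof -
  have fe: "f = (\<lambda>z. \<Sum>i\<in>UNIV. hs i ((A *v z - bb) $ i))" using fdef by auto
  have g1: "gf z \<bullet> h = (\<Sum>i\<in>UNIV. hs1 i ((A *v z - bb) $ i) * (A *v h) $ i)" for z h
  proof -
    have "(f has_derivative (\<lambda>h. \<Sum>i\<in>UNIV. hs1 i ((A *v z - bb) $ i) * (A *v h) $ i)) (at z)"
      unfolding fe using hd by (intro has_derivative_sum comp_deriv) auto
    from has_derivative_unique[OF d1[rule_format, of z] this] show ?thesis by metis
  qed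
  have ge: "(\<lambda>z. gf z \<bullet> v) = (\<lambda>z. \<Sum>i\<in>UNIV. hs1 i ((A *v z - bb) $ i) * (A *v v) $ i)"
    using g1 by auto
  have "((\<lambda>z. gf z \<bullet> v) has_derivative (\<lambda>h. (Hf x *v h) \<bullet> v)) (at x)"
    using d2 by (auto intro!: derivative_eq_intros)
  moreover have "((\<lambda>z. gf z \<bullet> v) has_derivative (\<lambda>h. \<Sum>i\<in>UNIV. hs2 i ((A *v x - bb) $ i) * (A *v h) $ i * (A *v v) $ i)) (at x)"
    unfolding ge using hd by (intro has_derivative_sum has_derivative_mult_left comp_deriv) auto
  ultimately have "(\<lambda>h. (Hf x *v h) \<bullet> v) = (\<lambda>h. \<Sum>i\<in>UNIV. hs2 i ((A *v x - bb) $ i) * (A *v h) $ i * (A *v v) $ i)"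
    by (rule has_derivative_unique)
  then have "(Hf x *v v) \<bullet> v = (\<Sum>i\<in>UNIV. hs2 i ((A *v x - bb) $ i) * (A *v v) $ i * (A *v v) $ i)" by metis
  then show ?thesis by (simp add: inner_commute power2_eq_square mult.assoc)
qed



lemma inner_transpose: "u \<bullet> (transpose A *v w) = (A *v u) \<bullet> (w::real^'m)" for A :: "real^'n^'m"
proof -
  have "u \<bullet> (transpose A *v w) = (\<Sum>j\<in>UNIV. u $ j * (\<Sum>i\<in>UNIV. A $ i $ j * w $ i))"
    by (simp add: inner_vec_def matrix_vector_mult_def transpose_def)
  also have "\<dots> = (\<Sum>j\<in>UNIV. \<Sum>i\<in>UNIV. u $ j * A $ i $ j * w $ i)"
    by (simp add: sum_distrib_left mult.assoc)
  also have "\<dots> = (\<Sum>i\<in>UNIV. \<Sum>j\<in>UNIV. u $ j * A $ i $ j * w $ i)"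
    by (rule sum.swap)
  also have "\<dots> = (\<Sum>i\<in>UNIV. (\<Sum>j\<in>UNIV. A $ i $ j * u $ j) * w $ i)"
    by (simp add: sum_distrib_right mult.commute mult.left_commute sum_distrib_left)
  also have "\<dots> = (A *v u) \<bullet> w"
    by (simp add: inner_vec_def matrix_vector_mult_def)
  finally show ?thesis .
qed

lemma tAA: "u \<bullet> ((transpose A ** D ** A) *v v) = (A *v u) \<bullet> (D *v (A *v v))"
  for A :: "real^'n^'m" and D :: "real^'m^'m"
proof -
  have "(transpose A ** D ** A) *v v = transpose A *v (D *v (A *v v))"
    by (simp add: matrix_vector_mul_assoc matrix_mul_assoc)
  then show ?thesis by (simp only: inner_transpose)
qed

lemma tA1: "u \<bullet> ((transpose A ** A) *v v) = (A *v u) \<bullet> (A *v v)"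
  for A :: "real^'n^'m"
  using tAA[of u A "mat 1" v] by (simp add: matrix_mul_rid)

lemma diag_mv: "diag_mat d *v w = (\<chi> i. d $ i * w $ i)"
proof -
  have "(\<Sum>j\<in>UNIV. (if i = j then d $ i else 0) * w $ j) = d $ i * w $ i" for i
    by (simp add: if_distrib[where f="\<lambda>a. a * _"] sum.delta cong: if_cong)
  then show ?thesis unfolding diag_mat_def matrix_vector_mult_def by (simp add: vec_eq_iff)
qed

lemma diag_quad: "w \<bullet> (diag_mat d *v z) = (\<Sum>i\<in>UNIV. d $ i * w $ i * z $ i)"
  by (simp add: diag_mv inner_vec_def mult.commute mult.left_commute)

lemma diag_sym: "\<forall>u v. (diag_mat d *v v) \<bullet> u = (diag_mat d *v u) \<bullet> v"
  by (simp add: diag_mv inner_vec_def mult.commute mult.left_commute)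


lemma ray_f:
  assumes d1: "\<forall>z. (f has_derivative (\<lambda>h. gf z \<bullet> h)) (at z)"
  shows "((\<lambda>s. f (p + s *\<^sub>R w)) has_real_derivative (gf (p + s *\<^sub>R w) \<bullet> w)) (at s)"
  using ray_rderiv[of f "\<lambda>h. gf (p + s *\<^sub>R w) \<bullet> h" p s w] d1 by simp

lemma descent:
  fixes f :: "'a::real_inner \<Rightarrow> real"
  assumes d1: "\<forall>z. (f has_derivative (\<lambda>h. gf z \<bullet> h)) (at z)"
    and L: "\<forall>z\<in>Om. \<forall>w\<in>Om. norm (gf z - gf w) \<le> L1 * norm (z - w)"
    and seg: "\<forall>s. 0 \<le> s \<and> s \<le> 1 \<longrightarrow> x + s *\<^sub>R d \<in> Om"
    and t: "0 \<le> t" "t \<le> 1"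
  shows "f (x + t *\<^sub>R d) \<le> f x + t * (gf x \<bullet> d) + L1 / 2 * t^2 * (norm d)^2"
proof (cases "t = 0")
  case True then show ?thesis by simp
next
  case False
  then have tp: "t > 0" using t by simp
  define c where "c = gf x \<bullet> d"
  define nd where "nd = (norm d)^2"
  define \<phi> where "\<phi> = (\<lambda>s. f (x + s *\<^sub>R d) - s * c - L1 / 2 * s^2 * nd)"
  have der: "(\<phi> has_real_derivative (gf (x + s *\<^sub>R d) \<bullet> d - c - L1 * s * nd)) (at s)" for s
    unfolding \<phi>_def
    by (rule derivative_eq_intros ray_f[OF d1] | simp)+
  obtain z where z: "0 < z" "z < t" "\<phi> t - \<phi> 0 = (t - 0) * (gf (x + z *\<^sub>R d) \<bullet> d - c - L1 * z * nd)"
    using MVT2[OF tp, of \<phi> "\<lambda>s. gf (x + s *\<^sub>R d) \<bullet> d - c - L1 * s * nd"] der by blast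
  have "gf (x + z *\<^sub>R d) \<bullet> d - c = (gf (x + z *\<^sub>R d) - gf x) \<bullet> d" unfolding c_def by (simp add: inner_diff_left)
  also have "\<dots> \<le> norm (gf (x + z *\<^sub>R d) - gf x) * norm d" by (rule Cauchy_Schwarz_ineq2[THEN abs_le_D1])
  also have "\<dots> \<le> (L1 * norm (z *\<^sub>R d)) * norm d"
  proof -
    have "x + z *\<^sub>R d \<in> Om" "x \<in> Om" using seg z t by (auto simp: dest: spec[of _ 0] spec[of _ z])
    then have "norm (gf (x + z *\<^sub>R d) - gf x) \<le> L1 * norm (z *\<^sub>R d)" using L by fastforce
    then show ?thesis by (simp add: mult_right_mono)
  qed
  also have "\<dots> = L1 * z * nd" unfolding nd_def using z by (simp add: power2_eq_square)
  finally have "gf (x + z *\<^sub>R d) \<bullet> d - c - L1 * z * nd \<le> 0" by simp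
  then have "\<phi> t - \<phi> 0 \<le> 0" using z(3) tp by (simp add: mult_nonneg_nonpos)
  then show ?thesis unfolding \<phi>_def c_def nd_def by simp
qed



lemma Pi_set_alt: "Pi_set B l u z = {y. (\<forall>i. l $ i \<le> y $ i \<and> y $ i \<le> u $ i) \<and> (\<forall>i. z $ i = 0 \<longrightarrow> y $ i = 0) \<and> (\<forall>j. (B *v z) $ j = 0 \<longrightarrow> (B *v y) $ j = 0)}"
  unfolding Pi_set_def box_set_def supp_vec_def by auto

lemma Pi_closed:
  fixes B :: "real^'n^'p" and z :: "real^'n"
  shows "closed (Pi_set B l u z)"
proof -
  have eq: "Pi_set B l u z = (\<Inter>i. {y. l $ i \<le> y $ i}) \<inter> (\<Inter>i. {y. y $ i \<le> u $ i}) \<inter> (\<Inter>i\<in>{i. z $ i = 0}. {y. y $ i = 0})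
        \<inter> (\<Inter>j\<in>{j. (B *v z) $ j = 0}. {y. (B *v y) $ j = 0})"
    unfolding Pi_set_alt by auto
  have cB: "continuous_on UNIV (\<lambda>y::real^'n. (B *v y) $ j)" for j
    by (rule bounded_linear.continuous_on[OF bounded_linear_vec_nth matrix_vector_mult_linear_continuous_on])
  have cI: "continuous_on UNIV (\<lambda>y::real^'n. y $ i)" for i
    by (rule bounded_linear.continuous_on[OF bounded_linear_vec_nth continuous_on_id])
  have "closed {y::real^'n. (B *v y) $ j = 0}" for j
    by (intro closed_Collect_eq cB continuous_on_const)
  moreover have "closed {y::real^'n. y $ i = 0}" "closed {y::real^'n. l $ i \<le> y $ i}" "closed {y::real^'n. y $ i \<le> u $ i}" for i
    by (intro closed_Collect_eq closed_Collect_le cI continuous_on_const)+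
  ultimately show ?thesis unfolding eq by (auto intro!: closed_Int closed_INT)
qed

lemma Pi_convex:
  fixes B :: "real^'n^'p" and z :: "real^'n"
  shows "convex (Pi_set B l u z)"
  unfolding convex_def Pi_set_alt
proof (intro ballI allI impI, safe)
  fix x y :: "real^'n" and a b :: real and i
  assume h: "\<forall>i. l $ i \<le> x $ i \<and> x $ i \<le> u $ i" "\<forall>i. l $ i \<le> y $ i \<and> y $ i \<le> u $ i"
    "0 \<le> a" "0 \<le> b" "a + b = 1"
  have "a * l $ i \<le> a * x $ i" "b * l $ i \<le> b * y $ i" using h by (auto intro: mult_left_mono)
  moreover have "a * x $ i \<le> a * u $ i" "b * y $ i \<le> b * u $ i" using h by (auto intro: mult_left_mono)
  moreover have "l $ i = a * l $ i + b * l $ i" "u $ i = a * u $ i + b * u $ i" using h(5) by (metis mult_1 distrib_right)+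
  ultimately show "l $ i \<le> (a *\<^sub>R x + b *\<^sub>R y) $ i" "(a *\<^sub>R x + b *\<^sub>R y) $ i \<le> u $ i" by auto
next
  fix x y :: "real^'n" and a b :: real and i
  assume "\<forall>i. z $ i = 0 \<longrightarrow> x $ i = 0" "\<forall>i. z $ i = 0 \<longrightarrow> y $ i = 0" "z $ i = 0"
  then show "(a *\<^sub>R x + b *\<^sub>R y) $ i = 0" by simp
next
  fix x y :: "real^'n" and a b :: real and j
  assume "\<forall>j. (B *v z) $ j = 0 \<longrightarrow> (B *v x) $ j = 0" "\<forall>j. (B *v z) $ j = 0 \<longrightarrow> (B *v y) $ j = 0" "(B *v z) $ j = 0"
  then show "(B *v (a *\<^sub>R x + b *\<^sub>R y)) $ j = 0" by (simp add: matrix_vector_right_distrib matrix_vector_mult_scaleR)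
qed

lemma Pi_self: "z \<in> box_set l u \<Longrightarrow> z \<in> Pi_set B l u z"
  unfolding Pi_set_def by simp

lemma Pi_box: "Pi_set B l u z \<subseteq> box_set l u"
  unfolding Pi_set_def by auto

lemma l0_mono: "supp_vec y \<subseteq> supp_vec z \<Longrightarrow> l0 y \<le> l0 z"
  unfolding l0_def by (simp add: card_mono)

lemma xbar_proj:
  fixes B :: "real^'n^'p"
  assumes mub: "mub > 0" and lam: "lam1 \<ge> 0" "lam2 \<ge> 0"
    and xO: "x \<in> box_set l u"
    and xbar: "xbar \<in> prox (1 / mub) (gfun B lam1 lam2 l u) w0"
    and sw: "supp_vec x = supp_vec xbar" "supp_vec (B *v x) = supp_vec (B *v xbar)"
  shows "xbar \<in> Pi_set B l u x \<and> xbar = closest_point (Pi_set B l u x) w0"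
proof -
  let ?g = "gfun B lam1 lam2 l u"
  have pr: "\<forall>y. ereal (mub / 2 * (norm (xbar - w0))\<^sup>2) + ?g xbar \<le> ereal (mub / 2 * (norm (y - w0))\<^sup>2) + ?g y"
    using xbar unfolding prox_def by simp
  have gfin: "y \<in> box_set l u \<Longrightarrow> ?g y = ereal (lam1 * l0 (B *v y) + lam2 * l0 y)" for y
    unfolding gfun_def ind_def by simp
  have "xbar \<in> box_set l u"
  proof (rule ccontr)
    assume "xbar \<notin> box_set l u"
    then have "?g xbar = \<infinity>" unfolding gfun_def ind_def by simp
    then show False using pr[rule_format, of x] gfin[OF xO] by simp
  qed
  then have xbP: "xbar \<in> Pi_set B l u x" unfolding Pi_set_def using sw by simp
  have "dist w0 xbar \<le> dist w0 y" if yP: "y \<in> Pi_set B l u x" for y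
  proof -
    have yO: "y \<in> box_set l u" using yP Pi_box by blast
    have "l0 y \<le> l0 xbar" "l0 (B *v y) \<le> l0 (B *v xbar)"
      using yP sw unfolding Pi_set_def by (auto intro!: l0_mono)
    then have gle: "lam1 * l0 (B *v y) + lam2 * l0 y \<le> lam1 * l0 (B *v xbar) + lam2 * l0 xbar"
      using lam by (intro add_mono mult_left_mono) auto
    have "mub / 2 * (norm (xbar - w0))\<^sup>2 + (lam1 * l0 (B *v xbar) + lam2 * l0 xbar)
          \<le> mub / 2 * (norm (y - w0))\<^sup>2 + (lam1 * l0 (B *v y) + lam2 * l0 y)"
      using pr[rule_format, of y] gfin[OF yO] gfin[OF \<open>xbar \<in> box_set l u\<close>] by simp
    with gle have "mub / 2 * (norm (xbar - w0))\<^sup>2 \<le> mub / 2 * (norm (y - w0))\<^sup>2" by linarith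
    then have "(norm (xbar - w0))\<^sup>2 \<le> (norm (y - w0))\<^sup>2" using mub by simp
    then have "norm (xbar - w0) \<le> norm (y - w0)" by (simp add: power2_le_iff_abs_le)
    then show ?thesis by (simp add: dist_norm norm_minus_commute)
  qed
  then have "xbar = closest_point (Pi_set B l u x) w0"
    by (intro closest_point_unique Pi_convex Pi_closed xbP) auto
  then show ?thesis using xbP by simp
qed

lemma diag_lmin: "lambda_min (diag_mat d) \<le> d $ i"
proof -
  have "lambda_min (diag_mat d) * (norm (axis i (1::real)))^2 \<le> axis i 1 \<bullet> (diag_mat d *v axis i 1)"
    by (rule lambda_min_le[OF diag_sym])
  moreover have "axis i (1::real) \<bullet> (diag_mat d *v axis i 1) = d $ i"
    unfolding diag_quad by (simp add: axis_def if_distrib[where f="\<lambda>a. _ * a"] cong: if_cong)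
  ultimately show ?thesis by simp
qed

theorem lemma4p1:
  fixes f :: "real^'n \<Rightarrow> real" and gf :: "real^'n \<Rightarrow> real^'n" and Hf :: "real^'n \<Rightarrow> real^'n^'n"
    and B :: "real^'n^'p" and l u :: "real^'n" and lam1 lam2 L1 :: real
    and eps mumin mumax tau alpha b1 b2 rho sigma vsig beta :: real
    and x xbar :: "real^'n" and mu :: real and mk :: nat and G :: "real^'n^'n"
    and A :: "real^'n^'m" and bb :: "real^'m"
    and hs hs1 hs2 :: "'m \<Rightarrow> real \<Rightarrow> real"
  defines "Om \<equiv> box_set l u"
    and "g \<equiv> gfun B lam1 lam2 l u"
    and "F \<equiv> (\<lambda>z. ereal (f z) + gfun B lam1 lam2 l u z)"
    and "mub \<equiv> mu * tau ^ mk"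
    and "e \<equiv> b1 * norm ((mu * tau ^ mk) *\<^sub>R (x - xbar)) powr sigma"
    and "hdiag \<equiv> (\<chi> i. hs2 i ((A *v x - bb) $ i))"
    and "P \<equiv> Pi_set B l u x"
    and "Th \<equiv> Theta (f x) (gf x) G x (Pi_set B l u x)"
  assumes lam: "lam1 > 0" "lam2 > 0"
    and lu: "\<forall>i. l $ i \<le> 0 \<and> 0 \<le> u $ i"
    and f_C2: "\<forall>z. (f has_derivative (\<lambda>h. gf z \<bullet> h)) (at z)"
              "\<forall>z. (gf has_derivative (\<lambda>h. Hf z *v h)) (at z)"
              "continuous_on UNIV Hf"
    and L1: "L1 > 0" "\<forall>z\<in>Om. \<forall>w\<in>Om. norm (gf z - gf w) \<le> L1 * norm (z - w)"
    and params: "eps \<ge> 0" "0 < mumin" "mumin < mumax" "tau > 1" "alpha > 0" "b1 > 0" "b2 \<ge> 1"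
                "0 < rho" "rho < 1/2" "0 < sigma" "sigma < 1/2" "sigma < vsig" "vsig \<le> 1"
                "0 < beta" "beta < 1"
    and x_in: "x \<in> Om"
    and mu: "mumin \<le> mu" "mu \<le> mumax"
    and xbar: "xbar \<in> prox (1 / mub) g (x - (1 / mub) *\<^sub>R gf x)"
              "F xbar \<le> F x - ereal (alpha / 2 * (norm (x - xbar))\<^sup>2)"
    and mk_least: "\<forall>m<mk. \<not> (\<exists>z \<in> prox (1 / (mu * tau ^ m)) g (x - (1 / (mu * tau ^ m)) *\<^sub>R gf x).
                              F z \<le> F x - ereal (alpha / 2 * (norm (x - z))\<^sup>2))"
    and nostop: "mub * norm (x - xbar) > eps"
    and switch: "supp_vec x = supp_vec xbar" "supp_vec (B *v x) = supp_vec (B *v xbar)"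
    and G_choice:
      "G = Hf x + (b2 * max (- lambda_min (Hf x)) 0 + e) *\<^sub>R mat 1
       \<or> ((\<forall>i t. (hs i has_real_derivative hs1 i t) (at t) \<and> (hs1 i has_real_derivative hs2 i t) (at t))
          \<and> (\<forall>i. continuous_on UNIV (hs2 i))
          \<and> (\<forall>z. f z = (\<Sum>i\<in>UNIV. hs i ((A *v z - bb) $ i)))
          \<and> (G = Hf x + (b2 * max (- lambda_min (diag_mat hdiag)) 0) *\<^sub>R (transpose A ** A) + e *\<^sub>R mat 1
             \<or> G = transpose A ** diag_pos hdiag ** A + e *\<^sub>R mat 1))"
  shows "let bnd = min (1 / mub) 1 / 2 * min (norm (mub *\<^sub>R (x - xbar))) (norm (mub *\<^sub>R (x - xbar)) powr (1 + vsig));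
             inex = (\<lambda>y. Th y \<le> Th x \<and> dist0 (csubdiff Th y) \<le> ereal bnd);
             Rk = (\<lambda>y. mub *\<^sub>R (y - closest_point P (y - (1 / mub) *\<^sub>R (G *v (y - x) + gf x))));
             rk = (\<lambda>z. mub *\<^sub>R (z - closest_point P (z - (1 / mub) *\<^sub>R gf z)))
         in
         (\<exists>ys. (\<forall>z. (\<forall>w. Th z \<le> Th w) \<longleftrightarrow> z = ys)
            \<and> (\<exists>\<delta>>0. \<forall>y. dist y ys < \<delta> \<longrightarrow> inex (y - (1 / mub) *\<^sub>R Rk y)))
       \<and> (\<forall>y. inex y \<longrightarrow>
            (let d = y - x;
                 ls = (\<lambda>t::nat. f (x + beta ^ t *\<^sub>R d) \<le> f x + rho * beta ^ t * (gf x \<bullet> d))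
             in (\<exists>t. ls t) \<and>
                beta ^ (LEAST t. ls t) \<ge> min 1 ((1 - rho) * b1 * beta / L1 * norm (mub *\<^sub>R (x - xbar)) powr sigma)))
       \<and> (\<forall>y. dist0 (csubdiff Th y) \<le> ereal bnd \<longrightarrow>
            norm (Rk y) \<le> 1/2 * min (norm (rk x)) (norm (rk x) powr (1 + vsig)))"
proof -
  have mupos: "mu > 0" using params(2) mu(1) by linarith
  have mub_pos: "mub > 0" unfolding mub_def using mupos params(4) by simp
  define N where "N = norm (mub *\<^sub>R (x - xbar))"
  have e_eq: "e = b1 * N powr sigma" unfolding e_def N_def mub_def by simp
  have xne: "x \<noteq> xbar" using nostop params(1) by auto
  have Npos: "N > 0" using mub_pos xne unfolding N_def by simp
  have epos: "e > 0" using e_eq params(6) Npos by simp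
  have ThP: "Th = Theta (f x) (gf x) G x P" by (simp add: Th_def P_def)
  have xO: "x \<in> box_set l u" using x_in Om_def by simp
  have cvP: "convex P" "closed P" unfolding P_def by (rule Pi_convex, rule Pi_closed)
  have xP: "x \<in> P" unfolding P_def using Pi_self[OF xO] .
  have Pne: "P \<noteq> {}" using xP by blast
  have PO: "P \<subseteq> Om" unfolding P_def Om_def by (rule Pi_box)
  have lam0: "lam1 \<ge> 0" "lam2 \<ge> 0" using lam by auto
  have xb0: "xbar \<in> P \<and> xbar = closest_point P (x - (1 / mub) *\<^sub>R gf x)"
    unfolding P_def using xbar_proj[OF mub_pos lam0 xO xbar(1)[unfolded g_def] switch] .
  then have xbP: "xbar \<in> P" and xbcp: "closest_point P (x - (1 / mub) *\<^sub>R gf x) = xbar" by auto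
  have Hsym: "\<forall>u v. (Hf x *v v) \<bullet> u = (Hf x *v u) \<bullet> v"
    using hess_sym[OF f_C2] by blast
  have Gfacts: "(\<forall>u v. (G *v v) \<bullet> u = (G *v u) \<bullet> v) \<and> (\<forall>v. e * (norm v)^2 \<le> v \<bullet> (G *v v))"
  proof (rule disjE[OF G_choice])
    assume G1: "G = Hf x + (b2 * max (- lambda_min (Hf x)) 0 + e) *\<^sub>R mat 1"
    define c where "c = b2 * max (- lambda_min (Hf x)) 0 + e"
    have Gv: "G *v v = Hf x *v v + c *\<^sub>R v" for v
      unfolding G1 c_def by (simp add: matrix_vector_mult_add_rdistrib scaleR_matrix_vector_assoc[symmetric])
    have sym: "\<forall>u v. (G *v v) \<bullet> u = (G *v u) \<bullet> v"
    proof (intro allI)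
      fix u v :: "real^'n"
      have "(G *v v) \<bullet> u = (Hf x *v v) \<bullet> u + c * (v \<bullet> u)" by (simp add: Gv inner_add_left)
      moreover have "(G *v u) \<bullet> v = (Hf x *v u) \<bullet> v + c * (u \<bullet> v)" by (simp add: Gv inner_add_left)
      ultimately show "(G *v v) \<bullet> u = (G *v u) \<bullet> v" using Hsym by (simp add: inner_commute)
    qed
    have pos: "e * (norm v)^2 \<le> v \<bullet> (G *v v)" for v
    proof -
      define m where "m = max (- lambda_min (Hf x)) 0"
      have m0: "m \<ge> 0" "- lambda_min (Hf x) \<le> m" unfolding m_def by auto
      have "m \<le> b2 * m" using m0 params(7) by (simp add: mult_right_mono[of 1 b2 m, simplified])
      then have cge: "c \<ge> - lambda_min (Hf x) + e" unfolding c_def m_def[symmetric] using m0 by linarith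
      have "lambda_min (Hf x) * (norm v)^2 \<le> v \<bullet> (Hf x *v v)" by (rule lambda_min_le[OF Hsym])
      moreover have "(- lambda_min (Hf x) + e) * (norm v)^2 \<le> c * (norm v)^2"
        using cge by (simp add: mult_right_mono)
      moreover have "v \<bullet> (G *v v) = v \<bullet> (Hf x *v v) + c * (norm v)^2"
        by (simp add: Gv inner_add_right power2_norm_eq_inner)
      ultimately show ?thesis by (simp add: algebra_simps)
    qed
    show ?thesis using sym pos by blast
  next
    assume G23: "(\<forall>i t. (hs i has_real_derivative hs1 i t) (at t) \<and> (hs1 i has_real_derivative hs2 i t) (at t))
          \<and> (\<forall>i. continuous_on UNIV (hs2 i))
          \<and> (\<forall>z. f z = (\<Sum>i\<in>UNIV. hs i ((A *v z - bb) $ i)))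
          \<and> (G = Hf x + (b2 * max (- lambda_min (diag_mat hdiag)) 0) *\<^sub>R (transpose A ** A) + e *\<^sub>R mat 1
             \<or> G = transpose A ** diag_pos hdiag ** A + e *\<^sub>R mat 1)"
    then have hd: "\<forall>i t. (hs i has_real_derivative hs1 i t) (at t) \<and> (hs1 i has_real_derivative hs2 i t) (at t)"
      and fdef: "\<forall>z. f z = (\<Sum>i\<in>UNIV. hs i ((A *v z - bb) $ i))"
      and G23': "G = Hf x + (b2 * max (- lambda_min (diag_mat hdiag)) 0) *\<^sub>R (transpose A ** A) + e *\<^sub>R mat 1
             \<or> G = transpose A ** diag_pos hdiag ** A + e *\<^sub>R mat 1" by auto
    show ?thesis
    proof (rule disjE[OF G23'])
      assume G2: "G = Hf x + (b2 * max (- lambda_min (diag_mat hdiag)) 0) *\<^sub>R (transpose A ** A) + e *\<^sub>R mat 1"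
      define c where "c = b2 * max (- lambda_min (diag_mat hdiag)) 0"
      have Gv: "G *v v = Hf x *v v + c *\<^sub>R ((transpose A ** A) *v v) + e *\<^sub>R v" for v
        unfolding G2 c_def by (simp add: matrix_vector_mult_add_rdistrib scaleR_matrix_vector_assoc[symmetric])
      have sym: "\<forall>u v. (G *v v) \<bullet> u = (G *v u) \<bullet> v"
      proof (intro allI)
        fix u v :: "real^'n"
        have aa: "((transpose A ** A) *v v) \<bullet> u = ((transpose A ** A) *v u) \<bullet> v"
          using tA1[of u A v] tA1[of v A u] by (simp add: inner_commute)
        have hh: "(Hf x *v v) \<bullet> u = (Hf x *v u) \<bullet> v" using Hsym by blast
        have a1: "(G *v v) \<bullet> u = (Hf x *v v) \<bullet> u + c * (((transpose A ** A) *v v) \<bullet> u) + e * (v \<bullet> u)"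
          by (simp add: Gv inner_add_left)
        have a2: "(G *v u) \<bullet> v = (Hf x *v u) \<bullet> v + c * (((transpose A ** A) *v u) \<bullet> v) + e * (u \<bullet> v)"
          by (simp add: Gv inner_add_left)
        show "(G *v v) \<bullet> u = (G *v u) \<bullet> v"
          unfolding a1 a2 aa hh by (simp add: inner_commute)
      qed
      have pos: "e * (norm v)^2 \<le> v \<bullet> (G *v v)" for v
      proof -
        define a where "a = A *v v"
        define m where "m = max (- lambda_min (diag_mat hdiag)) 0"
        have m0: "m \<ge> 0" unfolding m_def by auto
        have "m \<le> b2 * m" using m0 params(7) by (simp add: mult_right_mono[of 1 b2 m, simplified])
        then have cm: "c \<ge> m" unfolding c_def m_def[symmetric] .
        have di: "hdiag $ i + c \<ge> 0" for i
        proof -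
          have "lambda_min (diag_mat hdiag) \<le> hdiag $ i" by (rule diag_lmin)
          then show ?thesis using cm unfolding m_def by linarith
        qed
        have h1: "v \<bullet> (Hf x *v v) = (\<Sum>i\<in>UNIV. hdiag $ i * (a $ i)^2)"
          unfolding a_def hdiag_def using hess_comp[OF fdef hd f_C2(1,2)] by simp
        have h2: "v \<bullet> ((transpose A ** A) *v v) = (\<Sum>i\<in>UNIV. (a $ i)^2)"
          unfolding tA1 a_def by (simp add: inner_vec_def power2_eq_square)
        have "v \<bullet> (Hf x *v v) + c * (v \<bullet> ((transpose A ** A) *v v)) = (\<Sum>i\<in>UNIV. (hdiag $ i + c) * (a $ i)^2)"
          unfolding h1 h2 by (simp add: sum_distrib_left sum.distrib[symmetric] algebra_simps)
        also have "\<dots> \<ge> 0" using di by (intro sum_nonneg mult_nonneg_nonneg) auto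
        finally have "0 \<le> v \<bullet> (Hf x *v v) + c * (v \<bullet> ((transpose A ** A) *v v))" .
        moreover have "v \<bullet> (G *v v) = v \<bullet> (Hf x *v v) + c * (v \<bullet> ((transpose A ** A) *v v)) + e * (norm v)^2"
          by (simp add: Gv inner_add_right power2_norm_eq_inner)
        ultimately show ?thesis by simp
      qed
      show ?thesis using sym pos by blast
    next
      assume G3: "G = transpose A ** diag_pos hdiag ** A + e *\<^sub>R mat 1"
      define D where "D = diag_pos hdiag"
      have Gv: "G *v v = (transpose A ** D ** A) *v v + e *\<^sub>R v" for v
        unfolding G3 D_def by (simp add: matrix_vector_mult_add_rdistrib scaleR_matrix_vector_assoc[symmetric])
      have Dsym: "\<forall>u v. (D *v v) \<bullet> u = (D *v u) \<bullet> v" unfolding D_def diag_pos_def by (rule diag_sym)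
      have sym: "\<forall>u v. (G *v v) \<bullet> u = (G *v u) \<bullet> v"
      proof (intro allI)
        fix u v :: "real^'n"
        have aa: "((transpose A ** D ** A) *v v) \<bullet> u = ((transpose A ** D ** A) *v u) \<bullet> v"
          using tAA[of u A D v] tAA[of v A D u] Dsym by (simp add: inner_commute)
        have a1: "(G *v v) \<bullet> u = ((transpose A ** D ** A) *v v) \<bullet> u + e * (v \<bullet> u)"
          by (simp add: Gv inner_add_left)
        have a2: "(G *v u) \<bullet> v = ((transpose A ** D ** A) *v u) \<bullet> v + e * (u \<bullet> v)"
          by (simp add: Gv inner_add_left)
        show "(G *v v) \<bullet> u = (G *v u) \<bullet> v"
          unfolding a1 a2 aa by (simp add: inner_commute)
      qed
      have pos: "e * (norm v)^2 \<le> v \<bullet> (G *v v)" for v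
      proof -
        have "v \<bullet> ((transpose A ** D ** A) *v v) = (\<Sum>i\<in>UNIV. max (hdiag $ i) 0 * (A *v v) $ i * (A *v v) $ i)"
          unfolding tAA D_def diag_pos_def diag_quad by simp
        also have "\<dots> \<ge> 0" by (intro sum_nonneg) (simp add: mult.assoc)
        finally have "0 \<le> v \<bullet> ((transpose A ** D ** A) *v v)" .
        moreover have "v \<bullet> (G *v v) = v \<bullet> ((transpose A ** D ** A) *v v) + e * (norm v)^2"
          by (simp add: Gv inner_add_right power2_norm_eq_inner)
        ultimately show ?thesis by simp
      qed
      show ?thesis using sym pos by blast
    qed
  qed
  then have Gsym: "\<forall>u v. (G *v v) \<bullet> u = (G *v u) \<bullet> v" and Gpos: "\<forall>v. e * (norm v)^2 \<le> v \<bullet> (G *v v)" by auto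
  have Gpsd: "\<forall>v. 0 \<le> v \<bullet> (G *v v)"
  proof
    fix v :: "real^'n"
    have "0 \<le> e * (norm v)^2" using epos by simp
    then show "0 \<le> v \<bullet> (G *v v)" using Gpos by (meson order_trans)
  qed
  define q where "q = qm (f x) (gf x) G x"
  have Th_eq: "Th y = (if y \<in> P then ereal (q y) else \<infinity>)" for y
    unfolding ThP q_def by (rule Theta_eq)
  have qx: "q x = f x" unfolding q_def qm_def by simp
  define gq where "gq = (\<lambda>y. G *v (y - x) + gf x)"
  define bnd where "bnd = min (1 / mub) 1 / 2 * min N (N powr (1 + vsig))"
  have bnd_pos: "bnd > 0" unfolding bnd_def using mub_pos Npos by simp
  define INEX where "INEX = (\<lambda>y. Th y \<le> Th x \<and> dist0 (csubdiff Th y) \<le> ereal bnd)"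
  define RK where "RK = (\<lambda>y. mub *\<^sub>R (y - closest_point P (y - (1 / mub) *\<^sub>R (G *v (y - x) + gf x))))"
  define rK where "rK = (\<lambda>z. mub *\<^sub>R (z - closest_point P (z - (1 / mub) *\<^sub>R gf z)))"
  have partI: "\<exists>ys. (\<forall>z. (\<forall>w. Th z \<le> Th w) \<longleftrightarrow> z = ys)
            \<and> (\<exists>\<delta>>0. \<forall>y. dist y ys < \<delta> \<longrightarrow> INEX (y - (1 / mub) *\<^sub>R RK y))"
  proof -
    obtain ys where ysP: "ys \<in> P" and ysu: "\<forall>z. (\<forall>w. Th z \<le> Th w) \<longleftrightarrow> z = ys"
      using Theta_unique_min[OF Gsym Gpos epos cvP xP, of "f x" "gf x"] unfolding ThP by blast
    have ysmin: "\<forall>w. Th ys \<le> Th w" using ysu by blast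
    have nys: "\<forall>z\<in>P. (- gq ys) \<bullet> (z - ys) \<le> 0"
      using min_normal[OF Gsym cvP(1) ysP ysmin[unfolded ThP]] unfolding gq_def .
    have fix_ys: "closest_point P (ys - (1 / mub) *\<^sub>R gq ys) = ys"
      using proj_normal[OF cvP ysP nys, of "1 / mub"] mub_pos by simp
    have ys_ne: "ys \<noteq> x"
    proof
      assume "ys = x"
      then have nx: "\<forall>z\<in>P. (- gf x) \<bullet> (z - x) \<le> 0" using nys unfolding gq_def by simp
      have "closest_point P (x + (1 / mub) *\<^sub>R (- gf x)) = x"
        using proj_normal[OF cvP xP nx, of "1 / mub"] mub_pos by simp
      then have "closest_point P (x - (1 / mub) *\<^sub>R gf x) = x" by simp
      with xbcp xne show False by simp
    qed
    have qlt: "q ys < q x"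
    proof -
      have "Th ys \<le> Th x" using ysmin by blast
      then have le: "q ys \<le> q x" using ysP xP by (simp add: Th_eq)
      have "q ys \<noteq> q x"
      proof
        assume eq: "q ys = q x"
        have "\<forall>w. Th x \<le> Th w" using ysmin ysP xP eq by (simp add: Th_eq)
        then have "x = ys" using ysu by blast
        then show False using ys_ne by simp
      qed
      then show ?thesis using le by simp
    qed
    define pm where "pm = (\<lambda>y. closest_point P (y - (1 / mub) *\<^sub>R gq y))"
    define vm where "vm = (\<lambda>y. gq (pm y) + mub *\<^sub>R ((y - (1 / mub) *\<^sub>R gq y) - pm y))"
    have cgq: "continuous_on UNIV gq" unfolding gq_def
      by (auto intro!: continuous_intros bounded_linear.continuous_on[OF matrix_vector_mul_bounded_linear])
    have cw: "continuous_on UNIV (\<lambda>y. y - (1 / mub) *\<^sub>R gq y)"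
      using cgq by (auto intro!: continuous_intros)
    have pm_cont: "continuous_on UNIV pm" unfolding pm_def
      by (rule continuous_on_compose2[OF continuous_on_closest_point[OF cvP(1) cvP(2) Pne] cw]) auto
    have vm_cont: "continuous_on UNIV vm" unfolding vm_def
      using continuous_on_compose2[OF cgq pm_cont] cw pm_cont by (auto intro!: continuous_intros)
    have pm_ys: "pm ys = ys" unfolding pm_def using fix_ys .
    have vm_ys: "vm ys = 0" unfolding vm_def pm_ys using mub_pos by (simp add: algebra_simps)
    have pmP: "pm y \<in> P" for y unfolding pm_def using closest_point_in_set[OF cvP(2) Pne] .
    have vm_sub: "vm y \<in> csubdiff Th (pm y)" for y
    proof -
      define w where "w = y - (1 / mub) *\<^sub>R gq y"
      have "\<forall>z\<in>P. (mub *\<^sub>R (w - pm y)) \<bullet> (z - pm y) \<le> 0"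
      proof
        fix z assume zP: "z \<in> P"
        have "(w - pm y) \<bullet> (z - pm y) \<le> 0" unfolding pm_def w_def[symmetric]
          by (rule closest_point_dot[OF cvP zP])
        then show "(mub *\<^sub>R (w - pm y)) \<bullet> (z - pm y) \<le> 0"
          using mub_pos by (simp add: mult_nonneg_nonpos)
      qed
      from normal_subdiff[OF Gsym Gpsd pmP this, of x "gf x" "f x"]
      show ?thesis unfolding ThP vm_def gq_def w_def .
    qed
    define h1 where "h1 = (\<lambda>y. q (pm y))"
    have h1_cont: "continuous_on UNIV h1" unfolding h1_def q_def
      by (rule continuous_on_compose2[OF qm_cont pm_cont]) auto
    obtain d1 where d1: "d1 > 0" "\<forall>y. dist y ys < d1 \<longrightarrow> dist (h1 y) (h1 ys) < q x - q ys"
      using h1_cont qlt unfolding continuous_on_iff by (metis UNIV_I diff_gt_0_iff_gt)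
    obtain d2 where d2: "d2 > 0" "\<forall>y. dist y ys < d2 \<longrightarrow> dist (vm y) (vm ys) < bnd"
      using vm_cont bnd_pos unfolding continuous_on_iff by (metis UNIV_I)
    have "\<forall>y. dist y ys < min d1 d2 \<longrightarrow> INEX (y - (1 / mub) *\<^sub>R RK y)"
    proof (intro allI impI)
      fix y assume dy: "dist y ys < min d1 d2"
      have eqp: "y - (1 / mub) *\<^sub>R RK y = pm y"
        unfolding RK_def pm_def gq_def using mub_pos by simp
      have "h1 y < q x" using d1(2) dy qlt unfolding h1_def pm_ys
        by (auto simp: dist_real_def)
      then have t1: "Th (pm y) \<le> Th x" using pmP xP unfolding h1_def by (simp add: Th_eq)
      have "norm (vm y) < bnd" using d2(2) dy vm_ys by (auto simp: dist_norm)
      moreover have "csubdiff Th (pm y) \<noteq> {}" using vm_sub by blast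
      moreover have "infdist 0 (csubdiff Th (pm y)) \<le> norm (vm y)"
        using infdist_le[OF vm_sub[of y], of 0] by (simp add: dist_norm)
      ultimately have t2: "dist0 (csubdiff Th (pm y)) \<le> ereal bnd" unfolding dist0_def by simp
      show "INEX (y - (1 / mub) *\<^sub>R RK y)" unfolding eqp INEX_def using t1 t2 by simp
    qed
    then show ?thesis using ysu d1(1) d2(1) by (intro exI[of _ ys] conjI) (auto intro!: exI[of _ "min d1 d2"])
  qed
  have partII: "(\<exists>t. f (x + beta ^ t *\<^sub>R (y - x)) \<le> f x + rho * beta ^ t * (gf x \<bullet> (y - x))) \<and>
       beta ^ (LEAST t. f (x + beta ^ t *\<^sub>R (y - x)) \<le> f x + rho * beta ^ t * (gf x \<bullet> (y - x)))
         \<ge> min 1 ((1 - rho) * b1 * beta / L1 * norm (mub *\<^sub>R (x - xbar)) powr sigma)"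
    if iy: "INEX y" for y
  proof -
    define d where "d = y - x"
    define LS where "LS = (\<lambda>t::nat. f (x + beta ^ t *\<^sub>R d) \<le> f x + rho * beta ^ t * (gf x \<bullet> d))"
    have "Th y \<le> Th x" using iy unfolding INEX_def by simp
    then have yP: "y \<in> P" and qy: "q y \<le> q x" using xP by (auto simp: Th_eq split: if_splits)
    have qyd: "q y = f x + gf x \<bullet> d + 1/2 * (d \<bullet> (G *v d))" unfolding q_def qm_def d_def by simp
    define nd where "nd = (norm d)^2"
    have nd0: "nd \<ge> 0" unfolding nd_def by simp
    have gd: "gf x \<bullet> d \<le> - (e / 2) * nd"
      using qy qyd qx Gpos[rule_format, of d] unfolding nd_def by simp
    have seg: "\<forall>s. 0 \<le> s \<and> s \<le> 1 \<longrightarrow> x + s *\<^sub>R d \<in> Om"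
    proof (intro allI impI)
      fix s :: real assume s: "0 \<le> s \<and> s \<le> 1"
      have "x + s *\<^sub>R d = (1 - s) *\<^sub>R x + s *\<^sub>R y" unfolding d_def by (simp add: algebra_simps)
      then have "x + s *\<^sub>R d \<in> P" using convexD_alt[OF cvP(1) xP yP, of s] s by simp
      then show "x + s *\<^sub>R d \<in> Om" using PO by blast
    qed
    define c where "c = (1 - rho) * e / L1"
    have cpos: "c > 0" unfolding c_def using params(9) epos L1(1) by simp
    have key: "LS t" if bt: "beta ^ t \<le> c" for t
    proof -
      define s where "s = beta ^ t"
      have s0: "0 < s" "s \<le> 1" unfolding s_def using params(14,15) by (auto intro: power_le_one)
      have dsc: "f (x + s *\<^sub>R d) \<le> f x + s * (gf x \<bullet> d) + L1 / 2 * s^2 * nd"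
        unfolding nd_def by (rule descent[OF f_C2(1) L1(2) seg]) (use s0 in auto)
      have r1: "(1 - rho) * s * (gf x \<bullet> d) \<le> (1 - rho) * s * (- (e / 2) * nd)"
        using gd s0 params(9) by (intro mult_left_mono) auto
      have "L1 * s \<le> L1 * c" using bt L1(1) unfolding s_def by simp
      also have "\<dots> = (1 - rho) * e" unfolding c_def using L1(1) by simp
      finally have "(L1 * s) * (s * nd / 2) \<le> ((1 - rho) * e) * (s * nd / 2)"
        using s0 nd0 by (intro mult_right_mono) auto
      then have r2: "L1 / 2 * s^2 * nd \<le> (1 - rho) * s * ((e / 2) * nd)"
        by (simp add: power2_eq_square algebra_simps)
      have r1': "(1 - rho) * s * (gf x \<bullet> d) \<le> - ((1 - rho) * s * ((e / 2) * nd))"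
        using r1 by simp
      have ee: "(1 - rho) * s * (gf x \<bullet> d) = s * (gf x \<bullet> d) - rho * s * (gf x \<bullet> d)"
        by (simp add: algebra_simps)
      have "s * (gf x \<bullet> d) + L1 / 2 * s^2 * nd \<le> rho * s * (gf x \<bullet> d)"
        using r1' r2 ee by linarith
      then show ?thesis unfolding LS_def s_def[symmetric] using dsc by simp
    qed
    obtain t1 where "beta ^ t1 < c" using real_arch_pow_inv[OF cpos params(15)] by blast
    then have ex: "\<exists>t. LS t" using key by (meson less_imp_le)
    define t0 where "t0 = (LEAST t. LS t)"
    have bound: "min 1 (beta * c) \<le> beta ^ t0"
    proof (cases "t0 = 0")
      case True then show ?thesis by simp
    next
      case False
      then have "t0 - 1 < t0" by simp
      then have "\<not> LS (t0 - 1)" unfolding t0_def by (rule not_less_Least)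
      then have "\<not> beta ^ (t0 - 1) \<le> c" using key by blast
      then have "beta * c < beta * beta ^ (t0 - 1)" using params(14) by simp
      also have "beta * beta ^ (t0 - 1) = beta ^ t0" using False by (metis Suc_pred' neq0_conv power_Suc)
      finally show ?thesis by simp
    qed
    have "(1 - rho) * b1 * beta / L1 * norm (mub *\<^sub>R (x - xbar)) powr sigma = beta * c"
      unfolding c_def e_eq N_def by simp
    then show ?thesis using ex bound unfolding t0_def LS_def d_def by simp
  qed
  have partIII: "norm (RK y) \<le> 1/2 * min (norm (rK x)) (norm (rK x) powr (1 + vsig))"
    if dy: "dist0 (csubdiff Th y) \<le> ereal bnd" for y
  proof -
    define S where "S = csubdiff Th y"
    have Sne: "S \<noteq> {}" using dy unfolding S_def dist0_def by auto
    have inf_le: "infdist 0 S \<le> bnd" using dy Sne unfolding S_def[symmetric] dist0_def by simp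
    have vle: "norm (RK y) \<le> norm v" if vS: "v \<in> S" for v
    proof -
      have "y \<in> P \<and> (\<forall>z\<in>P. (v - gq y) \<bullet> (z - y) \<le> 0)"
        using subdiff_normal[OF Gsym cvP(1), of v "f x" "gf x" x y] vS unfolding S_def ThP gq_def by simp
      then have yP: "y \<in> P" and nn: "\<forall>z\<in>P. (v - gq y) \<bullet> (z - y) \<le> 0" by auto
      have cpy: "closest_point P (y + (1 / mub) *\<^sub>R (v - gq y)) = y"
        using proj_normal[OF cvP yP nn, of "1 / mub"] mub_pos by simp
      have "dist (closest_point P (y + (1 / mub) *\<^sub>R (v - gq y))) (closest_point P (y - (1 / mub) *\<^sub>R gq y))
            \<le> dist (y + (1 / mub) *\<^sub>R (v - gq y)) (y - (1 / mub) *\<^sub>R gq y)"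
        by (rule closest_point_lipschitz[OF cvP Pne])
      also have "\<dots> = norm v / mub" using mub_pos by (simp add: dist_norm algebra_simps)
      finally have "norm (y - closest_point P (y - (1 / mub) *\<^sub>R gq y)) \<le> norm v / mub"
        unfolding cpy by (simp add: dist_norm)
      then have "mub * norm (y - closest_point P (y - (1 / mub) *\<^sub>R gq y)) \<le> norm v"
        using mub_pos by (simp add: field_simps)
      then show ?thesis unfolding RK_def gq_def using mub_pos by simp
    qed
    have "norm (RK y) \<le> infdist 0 S"
      unfolding infdist_notempty[OF Sne] by (rule cINF_greatest[OF Sne]) (simp add: vle dist_norm)
    with inf_le have "norm (RK y) \<le> bnd" by simp
    moreover have "norm (rK x) = N" unfolding rK_def xbcp N_def ..
    moreover have "bnd \<le> 1/2 * min N (N powr (1 + vsig))"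
    proof -
      have "min (1 / mub) 1 \<le> 1" by simp
      moreover have "min N (N powr (1 + vsig)) \<ge> 0" using Npos by simp
      ultimately have "min (1 / mub) 1 * min N (N powr (1 + vsig)) \<le> 1 * min N (N powr (1 + vsig))"
        by (rule mult_right_mono)
      then show ?thesis unfolding bnd_def by simp
    qed
    ultimately show ?thesis by simp
  qed
  show ?thesis
    unfolding Let_def
    using partI partII partIII
    unfolding INEX_def RK_def rK_def bnd_def N_def
    by blast
qed

end
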